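(* Let $N=[n]$ and let $v:2^N\to\mathbb{R}_+$ be any monotone valuation with $v(\emptyset)=0$. Let $X$ be a maximal decision map for $v$ and let $p$ be a pure Nash equilibrium of the pricing game defined by $v$ and $X$. Then for any (not necessarily maximal) decision map $X'$ for $v$ and every $\epsilon>0$ there exists $p^\epsilon\in\mathbb{R}^n_+$ which is an $\epsilon$-Nash equilibrium of the pricing game defined by $v$ and $X'$, such that $v(X'(p^\epsilon))=v(X(p))$, and $p^\epsilon\to p$ as $\epsilon\to 0$.
   Context: Pricing game: $N=[n]$ is a set of services, service $i$ controlled by seller $i$. A buyer has valuation $v:2^N\to\mathbb{R}_+$, monotone with $v(\emptyset)=0$. For $p\in\mathbb{R}^n_+$, $p(S)=\sum_{j\in S}p_j$ and $D(v;p)=\arg\max_{S\subseteq N}(v(S)-p(S))$. A decision map is $X:\mathbb{R}^n_+\to 2^N$ with $X(p)\in D(v;p)$ for all $p$; it is maximal if for every $p$ there is no $S'\in D(v;p)$ with $X(p)\subsetneq S'$. Given a decision map $Y$, seller $i$'s utility is $u_i^Y(p)=p_i\cdot\mathbf{1}\{i\in Y(p)\}$. A pure Nash equilibrium of the game defined by $Y$ is a $p$ with $u^Y_i(p)\ge u^Y_i(p_i',p_{-i})$ for all $i$ and $p_i'\in\mathbb{R}_+$; an $\epsilon$-Nash equilibrium is a $p$ with $u^Y_i(p)\ge u^Y_i(p_i',p_{-i})-\epsilon$ for all $i$ and $p_i'\in\mathbb{R}_+$. The welfare of the game defined by $Y$ at $p$ is $v(Y(p))$. *)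

theory Defs
  imports Complex_Main
begin

text \<open>Services are the elements of a finite type 'n (so N = UNIV, n = CARD('n)).
Price vectors are functions 'n => real; R^n_+ is the set of nonnegative ones.\<close>

definition nonneg_prices :: "('n \<Rightarrow> real) \<Rightarrow> bool" where
  "nonneg_prices p \<longleftrightarrow> (\<forall>i. 0 \<le> p i)"

definition valuation :: "('n::finite set \<Rightarrow> real) \<Rightarrow> bool" where
  "valuation v \<longleftrightarrow> v {} = 0 \<and> (\<forall>S. 0 \<le> v S) \<and> (\<forall>S T. S \<subseteq> T \<longrightarrow> v S \<le> v T)"

definition price_of :: "('n \<Rightarrow> real) \<Rightarrow> 'n set \<Rightarrow> real" where
  "price_of p S = (\<Sum>j\<in>S. p j)"

definition demand :: "('n::finite set \<Rightarrow> real) \<Rightarrow> ('n \<Rightarrow> real) \<Rightarrow> 'n set set" where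
  "demand v p = {S. \<forall>T. v T - price_of p T \<le> v S - price_of p S}"

definition decision_map :: "('n::finite set \<Rightarrow> real) \<Rightarrow> (('n \<Rightarrow> real) \<Rightarrow> 'n set) \<Rightarrow> bool" where
  "decision_map v X \<longleftrightarrow> (\<forall>p. nonneg_prices p \<longrightarrow> X p \<in> demand v p)"

definition maximal_decision_map :: "('n::finite set \<Rightarrow> real) \<Rightarrow> (('n \<Rightarrow> real) \<Rightarrow> 'n set) \<Rightarrow> bool" where
  "maximal_decision_map v X \<longleftrightarrow> decision_map v X \<and>
     (\<forall>p. nonneg_prices p \<longrightarrow> \<not> (\<exists>S'\<in>demand v p. X p \<subset> S'))"

definition seller_utility :: "(('n \<Rightarrow> real) \<Rightarrow> 'n set) \<Rightarrow> 'n \<Rightarrow> ('n \<Rightarrow> real) \<Rightarrow> real" where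
  "seller_utility Y i p = p i * (if i \<in> Y p then 1 else 0)"

definition eps_nash :: "(('n \<Rightarrow> real) \<Rightarrow> 'n set) \<Rightarrow> real \<Rightarrow> ('n \<Rightarrow> real) \<Rightarrow> bool" where
  "eps_nash Y \<epsilon> p \<longleftrightarrow> nonneg_prices p \<and>
     (\<forall>i q. 0 \<le> q \<longrightarrow> seller_utility Y i (p(i := q)) - \<epsilon> \<le> seller_utility Y i p)"

definition pure_nash :: "(('n \<Rightarrow> real) \<Rightarrow> 'n set) \<Rightarrow> ('n \<Rightarrow> real) \<Rightarrow> bool" where
  "pure_nash Y p \<longleftrightarrow> nonneg_prices p \<and>
     (\<forall>i q. 0 \<le> q \<longrightarrow> seller_utility Y i (p(i := q)) \<le> seller_utility Y i p)"

end

theory Submission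
  imports Defs
begin

lemma price_upd_notin:
  fixes p :: "'n::finite \<Rightarrow> real"
  assumes "i \<notin> W" shows "price_of (p(i:=q)) W = price_of p W"
  unfolding price_of_def using assms by (intro sum.cong) auto

lemma price_upd_in:
  fixes p :: "'n::finite \<Rightarrow> real"
  assumes "i \<in> W" shows "price_of (p(i:=q)) W = price_of p W - p i + q"
proof -
  have "price_of (p(i:=q)) W = q + price_of (p(i:=q)) (W - {i})"
    unfolding price_of_def using assms by (simp add: sum.remove)
  also have "price_of (p(i:=q)) (W - {i}) = price_of p (W - {i})"
    by (rule price_upd_notin) simp
  also have "price_of p W = p i + price_of p (W - {i})"
    unfolding price_of_def using assms by (simp add: sum.remove)
  ultimately show ?thesis by linarith
qed

lemma price_nonneg:
  fixes p :: "'n::finite \<Rightarrow> real"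
  assumes "nonneg_prices p" shows "0 \<le> price_of p W"
  using assms unfolding price_of_def nonneg_prices_def by (simp add: sum_nonneg)

lemma price_mono:
  fixes p :: "'n::finite \<Rightarrow> real"
  assumes "nonneg_prices p" "A \<subseteq> B" shows "price_of p A \<le> price_of p B"
  using assms unfolding price_of_def nonneg_prices_def by (intro sum_mono2) auto

lemma price_split:
  fixes p :: "'n::finite \<Rightarrow> real"
  shows "price_of p T = price_of p (T \<inter> S) + price_of p (T - S)"
  unfolding price_of_def
  by (rule sum.Int_Diff) simp

lemma lemmaA:
  fixes v :: "'n::finite set \<Rightarrow> real" and X :: "('n \<Rightarrow> real) \<Rightarrow> 'n set"
  assumes dm: "decision_map v X" and nash: "pure_nash X p"
    and iT: "i \<in> T"
    and c: "c > p i * (if i \<in> X p then 1 else 0)"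
    and W: "\<And>W. i \<notin> W \<Longrightarrow> v W - price_of p W \<le> v T - price_of p T + p i - c"
  shows False
proof -
  have pn: "nonneg_prices p" using nash unfolding pure_nash_def by simp
  define u where "u = p i * (if i \<in> X p then 1 else 0)"
  have u0: "0 \<le> u" using pn unfolding u_def nonneg_prices_def by simp
  define q where "q = (u + c) / 2"
  have q: "u < q" "q < c" "0 \<le> q" using c u0 unfolding q_def u_def by auto
  have pn': "nonneg_prices (p(i:=q))" using pn q unfolding nonneg_prices_def by auto
  define Y where "Y = X (p(i:=q))"
  have Yd: "Y \<in> demand v (p(i:=q))" using dm pn' unfolding decision_map_def Y_def by auto
  have "i \<in> Y"
  proof (rule ccontr)
    assume "i \<notin> Y"
    have "v T - price_of (p(i:=q)) T \<le> v Y - price_of (p(i:=q)) Y"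
      using Yd unfolding demand_def by auto
    also have "\<dots> = v Y - price_of p Y" using price_upd_notin[OF \<open>i \<notin> Y\<close>] by simp
    also have "\<dots> \<le> v T - price_of p T + p i - c" using W \<open>i \<notin> Y\<close> by blast
    finally show False using price_upd_in[OF iT, of p q] q by simp
  qed
  hence su1: "seller_utility X i (p(i:=q)) = q" unfolding seller_utility_def Y_def by simp
  have su2: "seller_utility X i (p(i:=q)) \<le> seller_utility X i p"
    using nash q unfolding pure_nash_def by blast
  have su3: "seller_utility X i p = u" unfolding seller_utility_def u_def by simp
  show False using su1 su2 su3 q by linarith
qed

theorem mainTheorem3:
  fixes v :: "'n::finite set \<Rightarrow> real"
    and X X' :: "('n \<Rightarrow> real) \<Rightarrow> 'n set"
    and p :: "'n \<Rightarrow> real"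
  assumes "valuation v"
    and "maximal_decision_map v X"
    and "pure_nash X p"
    and "decision_map v X'"
  shows "\<exists>pe :: real \<Rightarrow> 'n \<Rightarrow> real.
           (\<forall>\<epsilon>>0. eps_nash X' \<epsilon> (pe \<epsilon>) \<and> v (X' (pe \<epsilon>)) = v (X p))
         \<and> (\<forall>i. ((\<lambda>\<epsilon>. pe \<epsilon> i) \<longlongrightarrow> p i) (at_right 0))"
proof -
  have dm: "decision_map v X" using assms(2) unfolding maximal_decision_map_def by simp
  have pn: "nonneg_prices p" using assms(3) unfolding pure_nash_def by simp
  define S where "S = X p"
  have Sd: "S \<in> demand v p" using dm pn unfolding decision_map_def S_def by auto
  have Sopt: "\<And>W. v W - price_of p W \<le> v S - price_of p S" using Sd unfolding demand_def by auto
  define P where "P = price_of p S"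
  have P0: "0 \<le> P" unfolding P_def by (rule price_nonneg[OF pn])
  define c where "c = 2 * (P + 1)"
  have c0: "c > 0" using P0 unfolding c_def by simp
  define t where "t = (\<lambda>e::real. e / (e + c))"
  define pe where "pe = (\<lambda>e j. if j \<in> S then (1 - t e) * p j else p j)"
  have key: "eps_nash X' e (pe e) \<and> v (X' (pe e)) = v (X p)" if e: "e > 0" for e
  proof -
    define r where "r = pe e"
    define tt where "tt = t e"
    have tt: "0 < tt" "tt < 1" "tt * c < e" using e c0 unfolding tt_def t_def
      by (auto simp: field_simps)
    have rn: "nonneg_prices r" using pn tt unfolding r_def pe_def nonneg_prices_def tt_def by auto
    have pr: "price_of r W = price_of p W - tt * price_of p (W \<inter> S)" for W
    proof -
      have "price_of r W = (\<Sum>j\<in>W. p j - (if j \<in> S then tt * p j else 0))"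
        unfolding price_of_def r_def pe_def tt_def by (intro sum.cong) (auto simp: algebra_simps)
      also have "\<dots> = price_of p W - (\<Sum>j\<in>W. if j \<in> S then tt * p j else 0)"
        unfolding price_of_def by (simp add: sum_subtractf)
      also have "(\<Sum>j\<in>W. if j \<in> S then tt * p j else 0) = (\<Sum>j\<in>W \<inter> S. tt * p j)"
        by (simp add: sum.inter_restrict)
      finally show ?thesis unfolding price_of_def by (simp add: sum_distrib_left)
    qed
    have interP: "price_of p (W \<inter> S) \<le> P" for W
      unfolding P_def by (rule price_mono[OF pn]) auto
    define T where "T = X' r"
    have Td: "T \<in> demand v r" using assms(4) rn unfolding decision_map_def T_def by auto
    have "v S - price_of r S \<le> v T - price_of r T" using Td unfolding demand_def by auto
    hence ineq: "v S - P + tt * P \<le> v T - price_of p T + tt * price_of p (T \<inter> S)"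
      using pr[of S] pr[of T] unfolding P_def by simp
    have UT: "v T - price_of p T \<le> v S - P" using Sopt unfolding P_def by simp
    have "tt * P \<le> tt * price_of p (T \<inter> S)" using ineq UT by linarith
    hence TS: "price_of p (T \<inter> S) = P" using interP[of T] tt by (simp add: mult_le_cancel_left)
    have "v S - P \<le> v T - price_of p T" using ineq TS by simp
    hence UTeq: "v T - price_of p T = v S - P" using UT by linarith
    have outside: "p j = 0" if "j \<in> T" "j \<notin> S" for j
    proof (rule ccontr)
      assume "p j \<noteq> 0"
      hence "p j > 0" using pn unfolding nonneg_prices_def by (metis less_eq_real_def)
      show False
      proof (rule lemmaA[OF dm assms(3) \<open>j \<in> T\<close>, of "p j"])
        show "p j * (if j \<in> X p then 1 else 0) < p j" using \<open>p j > 0\<close> \<open>j \<notin> S\<close> S_def by simp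
        show "v W - price_of p W \<le> v T - price_of p T + p j - p j" for W
          using Sopt[of W] UTeq unfolding P_def by simp
      qed
    qed
    have "price_of p (T - S) = 0" unfolding price_of_def using outside by simp
    hence "price_of p T = P" using price_split[of p T S] TS by simp
    hence val: "v T = v S" using UTeq by simp
    have inside: "j \<in> T" if "j \<in> S" "p j > 0" for j
    proof (rule ccontr)
      assume "j \<notin> T"
      have "P = price_of p (S \<inter> T) + price_of p (S - T)" using price_split[of p S T] P_def by simp
      moreover have "price_of p (S - T) \<ge> p j" unfolding price_of_def
        using pn \<open>j \<in> S\<close> \<open>j \<notin> T\<close> unfolding nonneg_prices_def
        by (intro member_le_sum) auto
      moreover have "S \<inter> T = T \<inter> S" by auto
      ultimately show False using TS \<open>p j > 0\<close> by simp
    qed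
    have nash: "seller_utility X' i (r(i := q)) - e \<le> seller_utility X' i r" if q0: "0 \<le> q" for i q
    proof -
      have rhs0: "0 \<le> seller_utility X' i r" using rn unfolding seller_utility_def nonneg_prices_def by simp
      define T' where "T' = X' (r(i:=q))"
      have rn': "nonneg_prices (r(i:=q))" using rn q0 unfolding nonneg_prices_def by auto
      have T'd: "T' \<in> demand v (r(i:=q))" using assms(4) rn' unfolding decision_map_def T'_def by auto
      define u where "u = p i * (if i \<in> S then 1 else 0)"
      show ?thesis
      proof (cases "i \<in> T'")
        case False
        then show ?thesis using rhs0 e unfolding seller_utility_def T'_def by simp
      next
        case True
        have ri: "r i \<le> p i" using pn tt unfolding r_def pe_def tt_def nonneg_prices_def
          by (auto simp: algebra_simps)
        have qb: "q \<le> u + tt * P"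
        proof (rule ccontr)
          assume "\<not> q \<le> u + tt * P"
          show False
          proof (rule lemmaA[OF dm assms(3) True, of "q - tt * P"])
            show "p i * (if i \<in> X p then 1 else 0) < q - tt * P"
              using \<open>\<not> q \<le> u + tt * P\<close> unfolding u_def S_def by simp
            show "v W - price_of p W \<le> v T' - price_of p T' + p i - (q - tt * P)" if "i \<notin> W" for W
            proof -
              have "v W - price_of (r(i:=q)) W \<le> v T' - price_of (r(i:=q)) T'"
                using T'd unfolding demand_def by auto
              moreover have "price_of (r(i:=q)) W = price_of r W" using price_upd_notin[OF that] .
              moreover have "price_of (r(i:=q)) T' = price_of r T' - r i + q" using price_upd_in[OF True] .
              moreover have "tt * price_of p (W \<inter> S) \<ge> 0" using tt price_nonneg[OF pn] by simp
              moreover have "tt * price_of p (T' \<inter> S) \<le> tt * P" using tt interP[of T'] by simp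
              ultimately show ?thesis using pr[of W] pr[of T'] ri by linarith
            qed
          qed
        qed
        have lhs: "seller_utility X' i (r(i := q)) = q" using True unfolding seller_utility_def T'_def by simp
        show ?thesis
        proof (cases "i \<in> S \<and> p i > 0")
          case True
          have "i \<in> T" using inside True by blast
          hence rhs: "seller_utility X' i r = (1 - tt) * p i"
            unfolding seller_utility_def T_def using True unfolding r_def pe_def tt_def by simp
          have "p i \<le> P" unfolding P_def price_of_def using pn True unfolding nonneg_prices_def
            by (intro member_le_sum) auto
          hence "tt * p i \<le> tt * P" using tt by simp
          moreover have "tt * P \<le> tt * c / 2" using tt unfolding c_def by simp
          moreover have "u = p i" using True unfolding u_def by simp
          ultimately show ?thesis using lhs rhs qb tt(3) by (simp add: algebra_simps)
        next
          case False
          hence "u = 0" unfolding u_def using pn unfolding nonneg_prices_def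
            by (metis less_eq_real_def mult_eq_0_iff)
          moreover have "tt * P < e"
          proof -
            have "P < c" using P0 unfolding c_def by simp
            hence "tt * P < tt * c" using tt(1) by simp
            thus ?thesis using tt(3) by simp
          qed
          ultimately show ?thesis using lhs qb rhs0 by simp
        qed
      qed
    qed
    show ?thesis using val rn nash unfolding eps_nash_def T_def r_def S_def by simp
  qed
  have conv: "((\<lambda>e. pe e i) \<longlongrightarrow> p i) (at_right 0)" for i
  proof -
    have "((\<lambda>e::real. e / (e + c)) \<longlongrightarrow> 0 / (0 + c)) (at_right 0)"
      using c0 by (intro tendsto_intros) auto
    hence t0: "(t \<longlongrightarrow> 0) (at_right 0)" unfolding t_def by simp
    show ?thesis
    proof (cases "i \<in> S")
      case True
      have "((\<lambda>e. (1 - t e) * p i) \<longlongrightarrow> (1 - 0) * p i) (at_right 0)"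
        by (intro tendsto_intros t0)
      then show ?thesis unfolding pe_def using True by simp
    next
      case False
      then show ?thesis unfolding pe_def by simp
    qed
  qed
  show ?thesis using key conv by blast
qed

end
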